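(* Let $C_0,C_1,C_2$ be the constants of the following fact: for the Square-Root SLOPE estimator $\hat\beta$ (with $A\ge16+4\sqrt2$), for all $\delta\in(0,1]$ and $n_1>\frac{C_0}{\delta^2}s\log(\frac{ep}{s})$, $\sup_{|\beta|_0\le s}\mathbf P_\beta(\|\hat\beta-\beta\|\ge\delta\sigma)\le C_1(\frac{s}{2p})^{C_2s}$. Let $s$ be an integer with $s\le p/2$, $\delta\in(0,1]$, and let $\hat\eta$ be the selector defined below with threshold $t=t_{\sigma\sqrt{1+\delta^2}}$. Then for all $n_1>\frac{C_0}{\delta^2}s\log(\frac{ep}{s})$, $$\sup_{\beta\in\Omega^p_{s,a}}\mathbf E_\beta|\hat\eta-\eta_\beta|\le2\psi(n_2,p,s,a,\sigma\sqrt{1+\delta^2})+C_1(s/2)^{C_2s}p^{1-C_2s},$$ $$\sup_{\beta\in\Omega^p_{s,a}}\mathbf P_\beta(\hat\eta\neq\eta_\beta)\le2\psi(n_2,p,s,a,\sigma\sqrt{1+\delta^2})+C_1(s/2)^{C_2s}p^{-C_2s}.$$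
   Context: Model: $Y=X\beta+\sigma\xi\in\mathbb{R}^n$, $X\in\mathbb{R}^{n\times p}$ with i.i.d. $\mathcal N(0,1)$ entries, $\xi\sim\mathcal N(0,\mathbb I_n)$ independent of $X$, $\sigma>0$. $\Omega^p_{s,a}=\{\beta\in\mathbb{R}^p:|\beta|_0\le s,\ |\beta_i|\ge a \text{ whenever }\beta_i\ne0\}$, $\eta_\beta=(\mathbf 1\{\beta_i\neq0\})_{i\le p}$, $|\cdot|$ the Hamming distance on $\{0,1\}^p$. The sample is split into disjoint subsamples $(X^{(1)},Y^{(1)})$ of size $n_1$ and $(X^{(2)},Y^{(2)})$ of size $n_2$, $n=n_1+n_2$. $\hat\beta$ is the Square-Root SLOPE estimator on the first subsample: $\hat\beta\in\arg\min_\beta\big(\|Y^{(1)}-X^{(1)}\beta\|/\sqrt{n_1}+2\sum_{j}\lambda_j\beta^*_j\big)$ with $\lambda_j=A\sqrt{\log(2p/j)/n}$ and $\beta^*_1\ge\dots\ge\beta^*_p$ the sorted $|\beta_i|$. The selector: $\hat\eta_i=\mathbf 1\Big\{\frac{|X_i^{(2)\top}(Y^{(2)}-\sum_{j\neq i}X^{(2)}_j\hat\beta_j)|}{\|X^{(2)}_i\|}>t(X^{(2)}_i)\Big\}$, $i=1,\dots,p$, with $X^{(2)}_i$ the $i$th column of $X^{(2)}$. For $\sigma'>0$, $t_{\sigma'}(u)=\frac{a\|u\|}{2}+\frac{\sigma'^2\log(\frac ps-1)}{a\|u\|}$. Define $\psi(m,p,s,a,\sigma')=(p-s)\mathbf P(\sigma'\varepsilon>t_{\sigma'}(\zeta))+s\,\mathbf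 P(\sigma'\varepsilon>(a\|\zeta\|-t_{\sigma'}(\zeta))_+)$ with $\varepsilon\sim\mathcal N(0,1)$, $\zeta\sim\mathcal N(0,\mathbb I_m)$ independent, and $x_+=\max(x,0)$. *)

theory Defs
  imports "HOL-Probability.Probability"
begin

definition std_gauss :: "real measure" where
  "std_gauss = density lborel std_normal_density"

definition gauss_vec :: "nat \<Rightarrow> (nat \<Rightarrow> real) measure" where
  "gauss_vec m = PiM {..<m} (\<lambda>_. std_gauss)"

definition vnorm :: "nat \<Rightarrow> (nat \<Rightarrow> real) \<Rightarrow> real" where
  "vnorm m u = sqrt (\<Sum>k<m. (u k)\<^sup>2)"

(* Sample space: design X (rows {..<n}, columns {..<p}, iid N(0,1)) and noise xi ~ N(0,I_n),
   independent *)
definition data_space :: "nat \<Rightarrow> nat \<Rightarrow> ((nat \<Rightarrow> nat \<Rightarrow> real) \<times> (nat \<Rightarrow> real)) measure" where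
  "data_space n p = PiM {..<n} (\<lambda>_. gauss_vec p) \<Otimes>\<^sub>M gauss_vec n"

definition Yobs :: "nat \<Rightarrow> real \<Rightarrow> (nat \<Rightarrow> real) \<Rightarrow> (nat \<Rightarrow> nat \<Rightarrow> real) \<times> (nat \<Rightarrow> real) \<Rightarrow> nat \<Rightarrow> real" where
  "Yobs p \<sigma> \<beta> \<omega> k = (\<Sum>i<p. fst \<omega> k i * \<beta> i) + \<sigma> * snd \<omega> k"

definition X1 :: "nat \<Rightarrow> nat \<Rightarrow> (nat \<Rightarrow> nat \<Rightarrow> real) \<times> (nat \<Rightarrow> real) \<Rightarrow> nat \<Rightarrow> nat \<Rightarrow> real" where
  "X1 n1 p \<omega> = (\<lambda>k i. if k < n1 \<and> i < p then fst \<omega> k i else 0)"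

definition Y1 :: "nat \<Rightarrow> nat \<Rightarrow> real \<Rightarrow> (nat \<Rightarrow> real) \<Rightarrow> (nat \<Rightarrow> nat \<Rightarrow> real) \<times> (nat \<Rightarrow> real) \<Rightarrow> nat \<Rightarrow> real" where
  "Y1 n1 p \<sigma> \<beta> \<omega> = (\<lambda>k. if k < n1 then Yobs p \<sigma> \<beta> \<omega> k else 0)"

definition X2 :: "nat \<Rightarrow> (nat \<Rightarrow> nat \<Rightarrow> real) \<times> (nat \<Rightarrow> real) \<Rightarrow> nat \<Rightarrow> nat \<Rightarrow> real" where
  "X2 n1 \<omega> = (\<lambda>k i. fst \<omega> (n1 + k) i)"

definition Y2 :: "nat \<Rightarrow> nat \<Rightarrow> real \<Rightarrow> (nat \<Rightarrow> real) \<Rightarrow> (nat \<Rightarrow> nat \<Rightarrow> real) \<times> (nat \<Rightarrow> real) \<Rightarrow> nat \<Rightarrow> real" where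
  "Y2 n1 p \<sigma> \<beta> \<omega> = (\<lambda>k. Yobs p \<sigma> \<beta> \<omega> (n1 + k))"

(* beta^*_1 >= ... >= beta^*_p : sorted absolute values (0-based list) *)
definition sorted_abs :: "nat \<Rightarrow> (nat \<Rightarrow> real) \<Rightarrow> real list" where
  "sorted_abs p b = rev (sort (map (\<lambda>i. \<bar>b i\<bar>) [0..<p]))"

definition slope_lambda :: "real \<Rightarrow> nat \<Rightarrow> nat \<Rightarrow> nat \<Rightarrow> real" where
  "slope_lambda A n p j = A * sqrt (ln (2 * real p / real j) / real n)"

(* Square-Root SLOPE objective on a sample (X, Y) of size n1; lambda uses the total n *)
definition sqrt_slope_obj :: "real \<Rightarrow> nat \<Rightarrow> nat \<Rightarrow> nat \<Rightarrow> (nat \<Rightarrow> nat \<Rightarrow> real) \<Rightarrow> (nat \<Rightarrow> real) \<Rightarrow> (nat \<Rightarrow> real) \<Rightarrow> real" where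
  "sqrt_slope_obj A n n1 p X Y b =
     vnorm n1 (\<lambda>k. Y k - (\<Sum>i<p. X k i * b i)) / sqrt (real n1)
     + 2 * (\<Sum>j<p. slope_lambda A n p (Suc j) * sorted_abs p b ! j)"

definition thr :: "real \<Rightarrow> real \<Rightarrow> nat \<Rightarrow> nat \<Rightarrow> nat \<Rightarrow> (nat \<Rightarrow> real) \<Rightarrow> real" where
  "thr a \<sigma>' p s m u = a * vnorm m u / 2 + \<sigma>'\<^sup>2 * ln (real p / real s - 1) / (a * vnorm m u)"

definition psi :: "nat \<Rightarrow> nat \<Rightarrow> nat \<Rightarrow> real \<Rightarrow> real \<Rightarrow> real" where
  "psi m p s a \<sigma>' =
     (let N = std_gauss \<Otimes>\<^sub>M gauss_vec m in
      (real p - real s) * measure N {x \<in> space N. \<sigma>' * fst x > thr a \<sigma>' p s m (snd x)}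
      + real s * measure N {x \<in> space N. \<sigma>' * fst x > max 0 (a * vnorm m (snd x) - thr a \<sigma>' p s m (snd x))})"

(* Omega^p_{s,a} (vectors in R^p, represented with zero entries beyond p) *)
definition Omega :: "nat \<Rightarrow> nat \<Rightarrow> real \<Rightarrow> (nat \<Rightarrow> real) set" where
  "Omega p s a = {\<beta>. (\<forall>i\<ge>p. \<beta> i = 0) \<and> card {i. i < p \<and> \<beta> i \<noteq> 0} \<le> s
                      \<and> (\<forall>i<p. \<beta> i \<noteq> 0 \<longrightarrow> \<bar>\<beta> i\<bar> \<ge> a)}"

definition eta :: "(nat \<Rightarrow> real) \<Rightarrow> nat \<Rightarrow> bool" where
  "eta \<beta> i = (\<beta> i \<noteq> 0)"

definition selector :: "nat \<Rightarrow> nat \<Rightarrow> ((nat \<Rightarrow> real) \<Rightarrow> real) \<Rightarrow> (nat \<Rightarrow> nat \<Rightarrow> real) \<Rightarrow> (nat \<Rightarrow> real) \<Rightarrow> (nat \<Rightarrow> real) \<Rightarrow> nat \<Rightarrow> bool" where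
  "selector n2 p t X Y bh i =
     (\<bar>\<Sum>k<n2. X k i * (Y k - (\<Sum>j\<in>{..<p} - {i}. X k j * bh j))\<bar> / vnorm n2 (\<lambda>k. X k i)
        > t (\<lambda>k. X k i))"

end

theory Submission
  imports Defs
begin


lemma sets_std_gauss[measurable_cong, simp]: "sets std_gauss = sets borel"
  by (simp add: std_gauss_def)
lemma space_std_gauss[simp]: "space std_gauss = UNIV"
  by (simp add: std_gauss_def)
lemma prob_space_std_gauss[simp]: "prob_space std_gauss"
  using real_dist_normal_dist unfolding real_distribution_def std_gauss_def by simp
lemma psp_std: "product_prob_space (\<lambda>_. std_gauss)"
  unfolding product_prob_space_def product_prob_space_axioms_def product_sigma_finite_def
  by (auto intro: prob_space_imp_sigma_finite)
lemma prob_space_PiM_std[simp]: "prob_space (PiM I (\<lambda>_. std_gauss))"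
  by (rule prob_space_PiM) simp
lemma prob_space_gauss_vec[simp]: "prob_space (gauss_vec m)"
  unfolding gauss_vec_def by simp
lemma prob_space_data_space[simp]: "prob_space (data_space n p)"
  unfolding data_space_def
  by (intro prob_space_pair prob_space_PiM) (auto simp: gauss_vec_def)

definition LL :: "nat \<Rightarrow> nat \<Rightarrow> ((nat \<times> nat) + nat) set" where
  "LL n p = Inl ` ({..<n} \<times> {..<p}) \<union> Inr ` {..<n}"

definition QQ :: "nat \<Rightarrow> nat \<Rightarrow> ((nat \<times> nat) + nat \<Rightarrow> real) measure" where
  "QQ n p = PiM (LL n p) (\<lambda>_. std_gauss)"

definition asm :: "nat \<Rightarrow> nat \<Rightarrow> ((nat \<times> nat) + nat \<Rightarrow> real) \<Rightarrow> (nat \<Rightarrow> nat \<Rightarrow> real) \<times> (nat \<Rightarrow> real)" where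
  "asm n p z = ((\<lambda>k\<in>{..<n}. \<lambda>j\<in>{..<p}. z (Inl (k,j))), (\<lambda>k\<in>{..<n}. z (Inr k)))"

definition flat :: "nat \<Rightarrow> nat \<Rightarrow> (nat \<Rightarrow> nat \<Rightarrow> real) \<times> (nat \<Rightarrow> real) \<Rightarrow> ((nat \<times> nat) + nat \<Rightarrow> real)" where
  "flat n p \<omega> = (\<lambda>l\<in>LL n p. case l of Inl (k,j) \<Rightarrow> fst \<omega> k j | Inr k \<Rightarrow> snd \<omega> k)"

lemma finite_LL[simp]: "finite (LL n p)"
  by (simp add: LL_def)

lemma asm_meas: "asm n p \<in> measurable (QQ n p) (data_space n p)"
  unfolding asm_def QQ_def data_space_def gauss_vec_def
  apply (intro measurable_Pair measurable_restrict)
   apply (rule measurable_component_singleton)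
   apply (auto simp: LL_def)
  done

lemma meas_std_iff[simp]: "f \<in> measurable M std_gauss \<longleftrightarrow> f \<in> borel_measurable M"
  by (subst measurable_cong_sets[OF refl sets_std_gauss]) (rule refl)

lemma fst_meas: "k < n \<Longrightarrow> j < p \<Longrightarrow>
   (\<lambda>x. fst x k j) \<in> borel_measurable (Pi\<^sub>M {..<n} (\<lambda>_. Pi\<^sub>M {..<p} (\<lambda>_. std_gauss)) \<Otimes>\<^sub>M N)"
proof -
  assume "k < n" "j < p"
  have 1: "(\<lambda>x. x k) \<in> measurable (Pi\<^sub>M {..<n} (\<lambda>_. Pi\<^sub>M {..<p} (\<lambda>_. std_gauss))) (Pi\<^sub>M {..<p} (\<lambda>_. std_gauss))"
    using \<open>k<n\<close> by (intro measurable_component_singleton) auto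
  have 2: "(\<lambda>y. y j) \<in> measurable (Pi\<^sub>M {..<p} (\<lambda>_. std_gauss)) std_gauss"
    using \<open>j<p\<close> by (intro measurable_component_singleton) auto
  have "(\<lambda>x. x k j) \<in> measurable (Pi\<^sub>M {..<n} (\<lambda>_. Pi\<^sub>M {..<p} (\<lambda>_. std_gauss))) std_gauss"
    using measurable_compose[OF 1 2] .
  then show ?thesis by (simp add: measurable_compose[OF measurable_fst])
qed

lemma snd_meas: "k < n \<Longrightarrow>
   (\<lambda>x. snd x k) \<in> borel_measurable (N \<Otimes>\<^sub>M Pi\<^sub>M {..<n} (\<lambda>_. std_gauss))"
proof -
  assume "k < n"
  have "(\<lambda>x. x k) \<in> measurable (Pi\<^sub>M {..<n} (\<lambda>_. std_gauss)) std_gauss"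
    using \<open>k<n\<close> by (intro measurable_component_singleton) auto
  then show ?thesis by (simp add: measurable_compose[OF measurable_snd])
qed

lemma flat_meas: "flat n p \<in> measurable (data_space n p) (QQ n p)"
  unfolding flat_def QQ_def data_space_def gauss_vec_def
proof (intro measurable_restrict)
  fix l assume "l \<in> LL n p"
  then show "(\<lambda>x. case l of Inl (k, j) \<Rightarrow> fst x k j | Inr k \<Rightarrow> snd x k)
         \<in> measurable (Pi\<^sub>M {..<n} (\<lambda>_. Pi\<^sub>M {..<p} (\<lambda>_. std_gauss)) \<Otimes>\<^sub>M Pi\<^sub>M {..<n} (\<lambda>_. std_gauss)) std_gauss"
    by (auto simp: LL_def fst_meas snd_meas)
qed

lemma asm_flat: "\<omega> \<in> space (data_space n p) \<Longrightarrow> asm n p (flat n p \<omega>) = \<omega>"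
  unfolding asm_def flat_def data_space_def gauss_vec_def
  by (cases \<omega>) (auto simp: space_pair_measure space_PiM PiE_iff LL_def extensional_def fun_eq_iff)

lemma psp_gp: "product_prob_space (\<lambda>_. Pi\<^sub>M {..<p} (\<lambda>_. std_gauss))"
  unfolding product_prob_space_def product_prob_space_axioms_def product_sigma_finite_def
  by (auto intro: prob_space_imp_sigma_finite)

lemma prod_LL: "(\<Prod>l\<in>LL n p. f l) = (\<Prod>k<n. \<Prod>j<p. f (Inl (k,j))) * (\<Prod>k<n. f (Inr k))"
proof -
  have "(\<Prod>l\<in>LL n p. f l) = (\<Prod>l\<in>Inl ` ({..<n} \<times> {..<p}). f l) * (\<Prod>l\<in>Inr ` {..<n}. f l)"
    unfolding LL_def by (rule prod.union_disjoint) auto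
  also have "(\<Prod>l\<in>Inl ` ({..<n} \<times> {..<p}). f l) = (\<Prod>x\<in>{..<n} \<times> {..<p}. f (Inl x))"
    by (subst prod.reindex) auto
  also have "\<dots> = (\<Prod>k<n. \<Prod>j<p. f (Inl (k,j)))"
    by (subst prod.cartesian_product) (simp add: case_prod_beta')
  also have "(\<Prod>l\<in>Inr ` {..<n}. f l) = (\<Prod>k<n. f (Inr k))"
    by (subst prod.reindex) auto
  finally show ?thesis .
qed

lemma distr_flat: "distr (data_space n p) (QQ n p) (flat n p) = QQ n p"
proof -
  interpret P: product_prob_space "\<lambda>_::(nat\<times>nat)+nat. std_gauss" "LL n p" by (rule psp_std)
  interpret R: product_prob_space "\<lambda>_::nat. Pi\<^sub>M {..<p} (\<lambda>_::nat. std_gauss)" "{..<n}" by (rule psp_gp)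
  interpret S: product_prob_space "\<lambda>_::nat. std_gauss" "{..<n}" by (rule psp_std)
  interpret N: prob_space "Pi\<^sub>M {..<n} (\<lambda>_::nat. std_gauss)" by simp
  show ?thesis unfolding QQ_def
  proof (rule P.PiM_eqI)
    show "finite (LL n p)" by simp
    show "sets (distr (data_space n p) (Pi\<^sub>M (LL n p) (\<lambda>_. std_gauss)) (flat n p)) = sets (Pi\<^sub>M (LL n p) (\<lambda>_. std_gauss))"
      by simp
    fix A assume A: "\<And>l. l \<in> LL n p \<Longrightarrow> A l \<in> sets std_gauss"
    let ?B1 = "PiE {..<n} (\<lambda>k. PiE {..<p} (\<lambda>j. A (Inl (k,j))))"
    let ?B2 = "PiE {..<n} (\<lambda>k. A (Inr k))"
    have pre: "flat n p -` PiE (LL n p) A \<inter> space (data_space n p) = ?B1 \<times> ?B2"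
    proof (intro set_eqI iffI)
      fix \<omega> assume a: "\<omega> \<in> flat n p -` PiE (LL n p) A \<inter> space (data_space n p)"
      obtain R \<xi> where w: "\<omega> = (R, \<xi>)" by fastforce
      have sp: "R \<in> PiE {..<n} (\<lambda>_. PiE {..<p} (\<lambda>_. UNIV))" "\<xi> \<in> PiE {..<n} (\<lambda>_. UNIV)"
        using a unfolding w data_space_def gauss_vec_def by (auto simp: space_pair_measure space_PiM)
      have fl: "\<And>l. l \<in> LL n p \<Longrightarrow> flat n p \<omega> l \<in> A l"
        using a by (auto simp: PiE_iff)
      have 1: "R k j \<in> A (Inl (k,j))" if "k < n" "j < p" for k j
        using fl[of "Inl (k,j)"] that by (auto simp: flat_def LL_def w)
      have 2: "\<xi> k \<in> A (Inr k)" if "k < n" for k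
        using fl[of "Inr k"] that by (auto simp: flat_def LL_def w)
      show "\<omega> \<in> ?B1 \<times> ?B2"
        using sp 1 2 unfolding w by (auto simp: PiE_iff)
    next
      fix \<omega> assume a: "\<omega> \<in> ?B1 \<times> ?B2"
      obtain R \<xi> where w: "\<omega> = (R, \<xi>)" by fastforce
      have a1: "R \<in> ?B1" "\<xi> \<in> ?B2" using a w by auto
      have "\<omega> \<in> space (data_space n p)"
        using a1 unfolding w data_space_def gauss_vec_def
        by (auto simp: space_pair_measure space_PiM PiE_iff)
      moreover have "flat n p \<omega> \<in> PiE (LL n p) A"
        using a1 unfolding w flat_def by (auto simp: LL_def PiE_iff)
      ultimately show "\<omega> \<in> flat n p -` PiE (LL n p) A \<inter> space (data_space n p)" by simp
    qed
    have A1: "\<And>k j. k < n \<Longrightarrow> j < p \<Longrightarrow> A (Inl (k,j)) \<in> sets std_gauss"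
      by (rule A) (auto simp: LL_def)
    have A2: "\<And>k. k < n \<Longrightarrow> A (Inr k) \<in> sets std_gauss"
      by (rule A) (auto simp: LL_def)
    have B1: "?B1 \<in> sets (Pi\<^sub>M {..<n} (\<lambda>_::nat. Pi\<^sub>M {..<p} (\<lambda>_::nat. std_gauss)))"
      using A1 by (intro sets_PiM_I_finite) (auto intro!: sets_PiM_I_finite)
    have B2: "?B2 \<in> sets (Pi\<^sub>M {..<n} (\<lambda>_::nat. std_gauss))"
      using A2 by (intro sets_PiM_I_finite) auto
    have "emeasure (distr (data_space n p) (Pi\<^sub>M (LL n p) (\<lambda>_. std_gauss)) (flat n p)) (Pi\<^sub>E (LL n p) A)
        = emeasure (data_space n p) (?B1 \<times> ?B2)"
      using A flat_meas[of n p] unfolding QQ_def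
      by (subst emeasure_distr) (auto simp: pre intro!: sets_PiM_I_finite)
    also have "\<dots> = emeasure (Pi\<^sub>M {..<n} (\<lambda>_::nat. Pi\<^sub>M {..<p} (\<lambda>_::nat. std_gauss))) ?B1
                     * emeasure (Pi\<^sub>M {..<n} (\<lambda>_::nat. std_gauss)) ?B2"
      unfolding data_space_def gauss_vec_def using B1 B2
      by (rule sigma_finite_measure.emeasure_pair_measure_Times[OF prob_space_imp_sigma_finite[OF prob_space_PiM_std]])
    also have "emeasure (Pi\<^sub>M {..<n} (\<lambda>_::nat. Pi\<^sub>M {..<p} (\<lambda>_::nat. std_gauss))) ?B1
        = (\<Prod>k<n. \<Prod>j<p. emeasure std_gauss (A (Inl (k,j))))"
    proof -
      have i: "emeasure (Pi\<^sub>M {..<p} (\<lambda>_::nat. std_gauss)) (PiE {..<p} (\<lambda>j. A (Inl (k,j))))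
          = (\<Prod>j<p. emeasure std_gauss (A (Inl (k,j))))" if "k < n" for k
        using A1 that by (subst S.emeasure_PiM) auto
      show ?thesis
        using A1 by (subst R.emeasure_PiM) (auto intro!: prod.cong sets_PiM_I_finite simp: i)
    qed
    also have "emeasure (Pi\<^sub>M {..<n} (\<lambda>_::nat. std_gauss)) ?B2 = (\<Prod>k<n. emeasure std_gauss (A (Inr k)))"
      using A2 by (subst S.emeasure_PiM) auto
    finally show "emeasure (distr (data_space n p) (Pi\<^sub>M (LL n p) (\<lambda>_. std_gauss)) (flat n p)) (Pi\<^sub>E (LL n p) A)
        = (\<Prod>l\<in>LL n p. emeasure std_gauss (A l))"
      by (simp add: prod_LL)
  qed
qed

lemma D_eq: "distr (QQ n p) (data_space n p) (asm n p) = data_space n p"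
proof (rule measure_eqI)
  show "sets (distr (QQ n p) (data_space n p) (asm n p)) = sets (data_space n p)" by simp
  fix E assume E: "E \<in> sets (distr (QQ n p) (data_space n p) (asm n p))"
  then have E': "E \<in> sets (data_space n p)" by simp
  have "emeasure (distr (QQ n p) (data_space n p) (asm n p)) E = emeasure (QQ n p) (asm n p -` E \<inter> space (QQ n p))"
    by (rule emeasure_distr[OF asm_meas E'])
  also have "\<dots> = emeasure (distr (data_space n p) (QQ n p) (flat n p)) (asm n p -` E \<inter> space (QQ n p))"
    by (simp add: distr_flat)
  also have "\<dots> = emeasure (data_space n p) (flat n p -` (asm n p -` E \<inter> space (QQ n p)) \<inter> space (data_space n p))"
    using E' asm_meas flat_meas by (intro emeasure_distr) (auto intro: measurable_sets)
  also have "flat n p -` (asm n p -` E \<inter> space (QQ n p)) \<inter> space (data_space n p) = E"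
    using sets.sets_into_space[OF E'] measurable_space[OF flat_meas] asm_flat by auto
  finally show "emeasure (distr (QQ n p) (data_space n p) (asm n p)) E = emeasure (data_space n p) E" .
qed



lemma distr_comp_std: "i \<in> K \<Longrightarrow> distr (PiM K (\<lambda>_. std_gauss)) lborel (\<lambda>w. w i) = std_gauss"
proof -
  assume i: "i \<in> K"
  have "distr (PiM K (\<lambda>_. std_gauss)) lborel (\<lambda>w. w i) = distr (PiM K (\<lambda>_. std_gauss)) std_gauss (\<lambda>w. w i)"
    by (rule distr_cong) auto
  also have "\<dots> = std_gauss"
    using distr_PiM_component[of K "\<lambda>_. std_gauss" i] i by simp
  finally show ?thesis .
qed

lemma indep_coords_std:
  assumes "K \<noteq> {}"
  shows "prob_space.indep_vars (PiM K (\<lambda>_. std_gauss)) (\<lambda>_. borel) (\<lambda>l w. w l) K"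
proof -
  interpret P: prob_space "PiM K (\<lambda>_. std_gauss)" by simp
  have rv: "(\<lambda>w. w l) \<in> measurable (PiM K (\<lambda>_. std_gauss)) borel" if "l \<in> K" for l
  proof -
    have "(\<lambda>w. w l) \<in> measurable (PiM K (\<lambda>_. std_gauss)) std_gauss"
      by (rule measurable_component_singleton) fact
    then show ?thesis by simp
  qed
  show ?thesis
  proof (subst P.indep_vars_iff_distr_eq_PiM'[OF assms rv])
    show "distr (PiM K (\<lambda>_. std_gauss)) (PiM K (\<lambda>_. borel)) (\<lambda>x. \<lambda>l\<in>K. x l)
        = PiM K (\<lambda>l. distr (PiM K (\<lambda>_. std_gauss)) borel (\<lambda>w. w l))"
    proof -
      have "distr (PiM K (\<lambda>_. std_gauss)) (PiM K (\<lambda>_. borel)) (\<lambda>x. \<lambda>l\<in>K. x l)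
          = distr (PiM K (\<lambda>_. std_gauss)) (PiM K (\<lambda>_. std_gauss)) (\<lambda>x. x)"
        by (rule distr_cong) (auto intro!: sets_PiM_cong simp: space_PiM PiE_iff extensional_def fun_eq_iff)
      also have "\<dots> = PiM K (\<lambda>_. std_gauss)" by simp
      also have "\<dots> = PiM K (\<lambda>l. distr (PiM K (\<lambda>_. std_gauss)) borel (\<lambda>w. w l))"
      proof (rule PiM_cong)
        fix l assume l: "l \<in> K"
        have "distr (PiM K (\<lambda>_. std_gauss)) borel (\<lambda>w. w l) = distr (PiM K (\<lambda>_. std_gauss)) lborel (\<lambda>w. w l)"
          by (rule distr_cong) auto
        then show "std_gauss = distr (PiM K (\<lambda>_. std_gauss)) borel (\<lambda>w. w l)"
          using distr_comp_std[OF l] by simp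
      qed simp
      finally show ?thesis .
    qed
  qed
qed

lemma gauss_lin_density:
  fixes K :: "'i set" and c :: "'i \<Rightarrow> real"
  assumes K: "finite K" and v: "(\<Sum>l\<in>K. (c l)\<^sup>2) = v" "0 < v"
  shows "distributed (PiM K (\<lambda>_. std_gauss)) lborel (\<lambda>w. \<Sum>l\<in>K. c l * w l) (normal_density 0 (sqrt v))"
proof -
  interpret P: prob_space "PiM K (\<lambda>_. std_gauss)" by simp
  define K' where "K' = {l\<in>K. c l \<noteq> 0}"
  have K'ne: "K' \<noteq> {}"
  proof
    assume "K' = {}"
    then have "\<forall>l\<in>K. c l = 0" by (auto simp: K'_def)
    then have "(\<Sum>l\<in>K. (c l)\<^sup>2) = 0" by simp
    with v show False by simp
  qed
  have K'K: "K' \<subseteq> K" "finite K'" using K by (auto simp: K'_def)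
  have Kne: "K \<noteq> {}" using K'ne K'K by auto
  have ind: "P.indep_vars (\<lambda>_. borel) (\<lambda>l w. c l * w l) K'"
    using P.indep_vars_compose2[OF P.indep_vars_subset[OF indep_coords_std[OF Kne] K'K(1)],
        of "\<lambda>l x. c l * x" "\<lambda>_. borel"] by simp
  have dc: "distributed (PiM K (\<lambda>_. std_gauss)) lborel (\<lambda>w. w l) (normal_density 0 1)" if "l \<in> K" for l
    unfolding distributed_def
  proof (intro conjI)
    show "distr (PiM K (\<lambda>_. std_gauss)) lborel (\<lambda>w. w l) = density lborel (\<lambda>x. ennreal (normal_density 0 1 x))"
      using distr_comp_std[OF that] by (simp add: std_gauss_def)
    show "(\<lambda>x. ennreal (normal_density 0 1 x)) \<in> borel_measurable lborel" by simp
    show "(\<lambda>w. w l) \<in> measurable (PiM K (\<lambda>_. std_gauss)) lborel"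
      using that by (subst measurable_cong_sets[where M'="PiM K (\<lambda>_. std_gauss)" and N'=std_gauss]) auto
  qed
  have dl: "distributed (PiM K (\<lambda>_. std_gauss)) lborel (\<lambda>w. c l * w l) (normal_density 0 \<bar>c l\<bar>)" if "l \<in> K'" for l
    using P.normal_density_affine[OF dc[of l], of "c l" 0] that by (simp add: K'_def)
  have "distributed (PiM K (\<lambda>_. std_gauss)) lborel (\<lambda>w. \<Sum>l\<in>K'. c l * w l)
          (normal_density (\<Sum>l\<in>K'. 0) (sqrt (\<Sum>l\<in>K'. \<bar>c l\<bar>\<^sup>2)))"
    by (rule P.sum_indep_normal[OF K'K(2) K'ne ind]) (auto simp: K'_def dl)
  moreover have "(\<lambda>w. \<Sum>l\<in>K'. c l * w l) = (\<lambda>w. \<Sum>l\<in>K. c l * w l)"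
    unfolding K'_def by (intro ext sum.mono_neutral_left K) auto
  moreover have "(\<Sum>l\<in>K'. \<bar>c l\<bar>\<^sup>2) = v"
    unfolding v(1)[symmetric] power2_abs K'_def by (intro sum.mono_neutral_left K) auto
  ultimately show ?thesis by simp
qed

lemma std_scale_density:
  assumes "0 < s"
  shows "distributed std_gauss lborel (\<lambda>x. s * x) (normal_density 0 s)"
proof -
  interpret prob_space std_gauss by simp
  have "distributed std_gauss lborel (\<lambda>x. x) (normal_density 0 1)"
    unfolding distributed_def
  proof (intro conjI)
    have "distr std_gauss lborel (\<lambda>x. x) = distr std_gauss std_gauss (\<lambda>x. x)"
      by (rule distr_cong) auto
    then show "distr std_gauss lborel (\<lambda>x. x) = density lborel (\<lambda>x. ennreal (normal_density 0 1 x))"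
      by (simp add: std_gauss_def)
  qed auto
  from normal_density_affine[OF this, of s 0] assms show ?thesis by simp
qed

lemma gauss_lin:
  fixes K :: "'i set" and c :: "'i \<Rightarrow> real"
  assumes K: "finite K" and v: "(\<Sum>l\<in>K. (c l)\<^sup>2) = v" "0 < v"
  shows "distr (PiM K (\<lambda>_. std_gauss)) lborel (\<lambda>w. \<Sum>l\<in>K. c l * w l) = distr std_gauss lborel (\<lambda>x. sqrt v * x)"
  using distributed_distr_eq_density[OF gauss_lin_density[OF assms]]
    distributed_distr_eq_density[OF std_scale_density[of "sqrt v"]] v by simp

lemma gauss_lin_emeasure:
  fixes K :: "'i set" and c :: "'i \<Rightarrow> real"
  assumes K: "finite K" and v: "(\<Sum>l\<in>K. (c l)\<^sup>2) = v" "0 < v" and B: "B \<in> sets borel"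
  shows "emeasure (PiM K (\<lambda>_. std_gauss)) {w \<in> space (PiM K (\<lambda>_. std_gauss)). (\<Sum>l\<in>K. c l * w l) \<in> B}
       = emeasure std_gauss {x. sqrt v * x \<in> B}"
proof -
  have m1: "(\<lambda>w. \<Sum>l\<in>K. c l * w l) \<in> measurable (PiM K (\<lambda>_. std_gauss)) lborel"
    using distributed_measurable[OF gauss_lin_density[OF assms(1-3)]] .
  have m2: "(\<lambda>x. sqrt v * x) \<in> measurable std_gauss lborel" by simp
  have "emeasure (PiM K (\<lambda>_. std_gauss)) {w \<in> space (PiM K (\<lambda>_. std_gauss)). (\<Sum>l\<in>K. c l * w l) \<in> B}
      = emeasure (distr (PiM K (\<lambda>_. std_gauss)) lborel (\<lambda>w. \<Sum>l\<in>K. c l * w l)) B"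
    using B m1 by (subst emeasure_distr) (auto intro: arg_cong2[where f=emeasure])
  also have "\<dots> = emeasure (distr std_gauss lborel (\<lambda>x. sqrt v * x)) B"
    by (simp add: gauss_lin[OF assms(1-3)])
  also have "\<dots> = emeasure std_gauss {x. sqrt v * x \<in> B}"
    using B m2 by (subst emeasure_distr) (auto intro: arg_cong2[where f=emeasure])
  finally show ?thesis .
qed



lemma std_neg: "distr std_gauss lborel (\<lambda>x. - x) = std_gauss"
proof -
  interpret prob_space std_gauss by simp
  have d: "distributed std_gauss lborel (\<lambda>x. - 1 * x) (normal_density 0 1)"
    using std_scale_density[of 1] normal_density_affine[of "\<lambda>x. 1 * x" 0 1 "-1" 0] by simp
  show ?thesis using distributed_distr_eq_density[OF d] by (simp add: std_gauss_def)
qed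

lemma std_singleton: "emeasure std_gauss {c} = 0"
proof -
  have ae: "AE x in lborel. x \<noteq> c" by (rule AE_lborel_singleton)
  have "emeasure std_gauss {c} = (\<integral>\<^sup>+x\<in>{c}. ennreal (normal_density 0 1 x) \<partial>lborel)"
    unfolding std_gauss_def by (subst emeasure_density) auto
  also have "\<dots> = 0"
    using ae by (intro nn_integral_0_iff_AE[THEN iffD2]) (auto elim!: eventually_mono)
  finally show ?thesis .
qed

lemma std_pos_half: "measure std_gauss {x. 0 < x} = 1/2"
proof -
  interpret prob_space std_gauss by simp
  have "measure std_gauss {x. x < 0} = measure std_gauss ((\<lambda>x. - x) -` {x. 0 < x} \<inter> space std_gauss)"
    by (auto intro: arg_cong2[where f=measure])
  also have "\<dots> = measure (distr std_gauss lborel (\<lambda>x. - x)) {x. 0 < x}"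
    by (subst measure_distr) auto
  also have "\<dots> = measure std_gauss {x. 0 < x}" by (simp add: std_neg)
  finally have neg: "measure std_gauss {x. x < 0} = measure std_gauss {x. 0 < x}" .
  have z: "measure std_gauss {0} = 0" using std_singleton[of 0] by (simp add: measure_def)
  have "measure std_gauss ({x. x < 0} \<union> {0} \<union> {x. 0 < x}) = measure std_gauss {x. x < 0} + measure std_gauss {0} + measure std_gauss {x. 0 < x}"
    by (subst finite_measure_Union, simp, simp, force, subst finite_measure_Union) auto
  moreover have "{x::real. x < 0} \<union> {0} \<union> {x. 0 < x} = UNIV" by auto
  ultimately show ?thesis using neg z prob_space by simp
qed

lemma std_scale_pos_half: "0 < s \<Longrightarrow> measure std_gauss {x. 0 < s * x} = 1/2"
  using std_pos_half by (simp add: zero_less_mult_iff)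

lemma cmp1:
  assumes "0 \<le> t" "0 < s1" "s1 < s2"
  shows "emeasure std_gauss {x. t < s1 * x} \<le> emeasure std_gauss {x. t < s2 * x}"
proof (rule emeasure_mono)
  show "{x. t < s1 * x} \<subseteq> {x. t < s2 * x}"
  proof
    fix x assume "x \<in> {x. t < s1 * x}"
    then have "t < s1 * x" by simp
    then have "0 < s1 * x" using assms by linarith
    then have "0 < x" using assms by (simp add: zero_less_mult_iff)
    then have "s1 * x < s2 * x" using assms by simp
    then show "x \<in> {x. t < s2 * x}" using \<open>t < s1 * x\<close> by simp
  qed
qed simp

lemma cmp2:
  assumes "0 < t" "0 < s1" "s1 < s2"
  shows "emeasure std_gauss {x. t \<le> s1 * x} \<le> emeasure std_gauss {x. t < s2 * x}"
proof (rule emeasure_mono)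
  show "{x. t \<le> s1 * x} \<subseteq> {x. t < s2 * x}"
  proof
    fix x assume "x \<in> {x. t \<le> s1 * x}"
    then have "t \<le> s1 * x" by simp
    then have "0 < s1 * x" using assms by linarith
    then have "0 < x" using assms by (simp add: zero_less_mult_iff)
    then have "s1 * x < s2 * x" using assms by simp
    then show "x \<in> {x. t < s2 * x}" using \<open>t \<le> s1 * x\<close> by simp
  qed
qed simp

lemma two_half: "(2::ennreal) * ennreal (1/2) = 1"
proof -
  have "(2::ennreal) * ennreal (1/2) = ennreal 2 * ennreal (1/2)" by simp
  also have "\<dots> = ennreal (2 * (1/2))" by (rule ennreal_mult[symmetric]) auto
  finally show ?thesis by simp
qed

lemma half_eq: "0 < s' \<Longrightarrow> c0 \<le> 0 \<Longrightarrow> 2 * emeasure std_gauss {x. max 0 c0 < s' * x} = 1"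
proof -
  assume a: "0 < s'" "c0 \<le> 0"
  interpret G: prob_space std_gauss by simp
  have p: "measure std_gauss {x. max 0 c0 < s' * x} = 1/2"
    using a std_scale_pos_half[OF a(1)] by (simp add: max_def)
  have "emeasure std_gauss {x. max 0 c0 < s' * x} = ennreal (measure std_gauss {x. max 0 c0 < s' * x})"
    by (rule G.emeasure_eq_measure)
  then show ?thesis by (simp only: p two_half)
qed

context
  fixes K :: "'i set" and c :: "'i \<Rightarrow> real" and v s' :: real
  assumes K: "finite K" and v: "(\<Sum>l\<in>K. (c l)\<^sup>2) = v" "0 < v" and vs: "sqrt v < s'"
begin

lemma S_meas: "(\<lambda>w. \<Sum>l\<in>K. c l * w l) \<in> borel_measurable (PiM K (\<lambda>_. std_gauss))"
  using distributed_measurable[OF gauss_lin_density[OF K v]] by simp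

lemma S_meas': "(\<lambda>w. \<Sum>l\<in>K. - c l * w l) \<in> borel_measurable (PiM K (\<lambda>_. std_gauss))"
  using distributed_measurable[OF gauss_lin_density[OF K, of "\<lambda>l. - c l"]] v by simp

lemma core_null:
  assumes T: "0 \<le> T"
  shows "emeasure (PiM K (\<lambda>_. std_gauss)) {w \<in> space (PiM K (\<lambda>_. std_gauss)). T < \<bar>\<Sum>l\<in>K. c l * w l\<bar>}
     \<le> 2 * emeasure std_gauss {x. T < s' * x}"
proof -
  let ?P = "PiM K (\<lambda>_. std_gauss)"
  let ?A = "{w \<in> space ?P. (\<Sum>l\<in>K. c l * w l) \<in> {T<..}}"
  let ?B = "{w \<in> space ?P. (\<Sum>l\<in>K. - c l * w l) \<in> {T<..}}"
  have sv: "0 < sqrt v" using v by simp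
  have "emeasure ?P {w \<in> space ?P. T < \<bar>\<Sum>l\<in>K. c l * w l\<bar>} \<le> emeasure ?P (?A \<union> ?B)"
    by (rule emeasure_mono) (auto simp: sum_negf abs_real_def split: if_splits intro!: measurable_sets S_meas S_meas')
  also have "\<dots> \<le> emeasure ?P ?A + emeasure ?P ?B"
    by (rule emeasure_subadditive) (auto intro!: measurable_sets S_meas S_meas' simp del: mult_minus_left)
  also have "emeasure ?P ?A = emeasure std_gauss {x. sqrt v * x \<in> {T<..}}"
    by (rule gauss_lin_emeasure[OF K v]) simp
  also have "emeasure ?P ?B = emeasure std_gauss {x. sqrt v * x \<in> {T<..}}"
    by (rule gauss_lin_emeasure[OF K _ v(2)]) (use v in simp_all)
  also have "emeasure std_gauss {x. sqrt v * x \<in> {T<..}} \<le> emeasure std_gauss {x. T < s' * x}"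
    using cmp1[OF T sv vs] by simp
  finally show ?thesis by (simp add: mult_2 add_mono)
qed

lemma core_nonnull:
  assumes T: "T + c0 \<le> \<bar>m\<bar>"
  shows "emeasure (PiM K (\<lambda>_. std_gauss)) {w \<in> space (PiM K (\<lambda>_. std_gauss)). \<not> (T < \<bar>m + (\<Sum>l\<in>K. c l * w l)\<bar>)}
     \<le> 2 * emeasure std_gauss {x. max 0 c0 < s' * x}"
proof -
  let ?P = "PiM K (\<lambda>_. std_gauss)"
  interpret P: prob_space ?P by simp
  interpret G: prob_space std_gauss by simp
  have sv: "0 < sqrt v" using v by simp
  have s'pos: "0 < s'" using sv vs by linarith
  show ?thesis
  proof (cases "c0 \<le> 0")
    case True
    have "emeasure ?P {w \<in> space ?P. \<not> (T < \<bar>m + (\<Sum>l\<in>K. c l * w l)\<bar>)} \<le> emeasure ?P (space ?P)"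
      by (rule emeasure_mono) auto
    also have "\<dots> = 1" by (simp add: P.emeasure_space_1)
    also have "1 = 2 * emeasure std_gauss {x. max 0 c0 < s' * x}"
      using half_eq[OF s'pos True] by simp
    finally show ?thesis .
  next
    case False
    then have c0: "0 < c0" by simp
    let ?A = "{w \<in> space ?P. (\<Sum>l\<in>K. c l * w l) \<in> {c0..}}"
    let ?B = "{w \<in> space ?P. (\<Sum>l\<in>K. - c l * w l) \<in> {c0..}}"
    have "emeasure ?P {w \<in> space ?P. \<not> (T < \<bar>m + (\<Sum>l\<in>K. c l * w l)\<bar>)} \<le> emeasure ?P (?A \<union> ?B)"
      using T by (intro emeasure_mono) (auto simp: sum_negf abs_real_def split: if_splits intro!: measurable_sets S_meas S_meas')
    also have "\<dots> \<le> emeasure ?P ?A + emeasure ?P ?B"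
      by (rule emeasure_subadditive) (auto intro!: measurable_sets S_meas S_meas' simp del: mult_minus_left)
    also have "emeasure ?P ?A = emeasure std_gauss {x. sqrt v * x \<in> {c0..}}"
      by (rule gauss_lin_emeasure[OF K v]) simp
    also have "emeasure ?P ?B = emeasure std_gauss {x. sqrt v * x \<in> {c0..}}"
      by (rule gauss_lin_emeasure[OF K _ v(2)]) (use v in simp_all)
    also have "emeasure std_gauss {x. sqrt v * x \<in> {c0..}} \<le> emeasure std_gauss {x. max 0 c0 < s' * x}"
      using cmp2[OF c0 sv vs] c0 by simp
    finally show ?thesis by (simp add: mult_2 add_mono)
  qed
qed

end

lemma half_bound:
  assumes "c0 \<le> 0" "0 < s'" "prob_space P"
  shows "emeasure P A \<le> 2 * emeasure std_gauss {x. max 0 c0 < s' * x}"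
proof -
  interpret P: prob_space P by fact
  interpret G: prob_space std_gauss by simp
  have "emeasure P A \<le> 1" by (rule P.emeasure_le_1)
  also have "1 = 2 * emeasure std_gauss {x. max 0 c0 < s' * x}"
    using half_eq[OF assms(2,1)] by simp
  finally show ?thesis .
qed

definition L3 :: "nat \<Rightarrow> nat \<Rightarrow> nat \<Rightarrow> nat \<Rightarrow> ((nat \<times> nat) + nat) set" where
  "L3 n1 n2 p i = Inl ` ((\<lambda>(k,j). (n1+k, j)) ` ({..<n2} \<times> ({..<p}-{i}))) \<union> Inr ` ((\<lambda>k. n1+k) ` {..<n2})"

definition LA :: "nat \<Rightarrow> nat \<Rightarrow> nat \<Rightarrow> nat \<Rightarrow> ((nat \<times> nat) + nat) set" where
  "LA n1 n2 p i = LL (n1+n2) p - L3 n1 n2 p i"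

lemma finite_L3[simp]: "finite (L3 n1 n2 p i)" by (simp add: L3_def)
lemma finite_LA[simp]: "finite (LA n1 n2 p i)" by (simp add: LA_def)
lemma L3_sub: "L3 n1 n2 p i \<subseteq> LL (n1+n2) p" by (auto simp: L3_def LL_def)
lemma LL_split: "LL (n1+n2) p = LA n1 n2 p i \<union> L3 n1 n2 p i" "LA n1 n2 p i \<inter> L3 n1 n2 p i = {}"
  using L3_sub[of n1 n2 p i] by (auto simp: LA_def)

lemma sum_L3: "(\<Sum>l\<in>L3 n1 n2 p i. g l) = (\<Sum>k<n2. (\<Sum>j\<in>{..<p}-{i}. g (Inl (n1+k,j))) + g (Inr (n1+k)))"
proof -
  have "(\<Sum>l\<in>L3 n1 n2 p i. g l) = (\<Sum>l\<in>Inl ` ((\<lambda>(k,j). (n1+k, j)) ` ({..<n2} \<times> ({..<p}-{i}))). g l)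
        + (\<Sum>l\<in>Inr ` ((\<lambda>k. n1+k) ` {..<n2}). g l)"
    unfolding L3_def by (rule sum.union_disjoint) auto
  also have "(\<Sum>l\<in>Inl ` ((\<lambda>(k,j). (n1+k, j)) ` ({..<n2} \<times> ({..<p}-{i}))). g l)
      = (\<Sum>x\<in>{..<n2} \<times> ({..<p}-{i}). g (Inl (n1 + fst x, snd x)))"
    by (subst sum.reindex, simp, subst sum.reindex) (auto simp: inj_on_def case_prod_beta)
  also have "\<dots> = (\<Sum>k<n2. \<Sum>j\<in>{..<p}-{i}. g (Inl (n1+k,j)))"
    by (subst sum.Sigma) (auto simp: case_prod_beta)
  also have "(\<Sum>l\<in>Inr ` ((\<lambda>k. n1+k) ` {..<n2}). g l) = (\<Sum>k<n2. g (Inr (n1+k)))"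
    by (subst sum.reindex, simp, subst sum.reindex) (auto simp: inj_on_def)
  finally show ?thesis by (simp add: sum.distrib)
qed



lemma fst_all: "(\<lambda>\<omega>. fst \<omega> k j) \<in> borel_measurable (data_space n p)"
proof (cases "k < n \<and> j < p")
  case True
  then show ?thesis unfolding data_space_def gauss_vec_def by (intro fst_meas) auto
next
  case False
  have "(\<lambda>\<omega>. (if k < n then undefined else (undefined :: nat \<Rightarrow> real) j)) \<in> borel_measurable (data_space n p)"
    by simp
  moreover have "\<And>\<omega>. \<omega> \<in> space (data_space n p) \<Longrightarrow> fst \<omega> k j = (if k < n then undefined else (undefined :: nat \<Rightarrow> real) j)"
    using False unfolding data_space_def gauss_vec_def
    by (auto simp: space_pair_measure space_PiM PiE_iff extensional_def)
  ultimately show ?thesis by (simp cong: measurable_cong)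
qed

lemma snd_all: "(\<lambda>\<omega>. snd \<omega> k) \<in> borel_measurable (data_space n p)"
proof (cases "k < n")
  case True
  then show ?thesis unfolding data_space_def gauss_vec_def by (intro snd_meas) auto
next
  case False
  have "\<And>\<omega>. \<omega> \<in> space (data_space n p) \<Longrightarrow> snd \<omega> k = undefined"
    using False unfolding data_space_def gauss_vec_def
    by (auto simp: space_pair_measure space_PiM PiE_iff extensional_def)
  then show ?thesis by (simp cong: measurable_cong)
qed

lemma vnorm_meas[measurable]: "(\<lambda>\<zeta>. vnorm m \<zeta>) \<in> borel_measurable (gauss_vec m)"
proof -
  have "(\<lambda>\<zeta>. \<Sum>k<m. (\<zeta> k)\<^sup>2) \<in> borel_measurable (PiM {..<m} (\<lambda>_. std_gauss))"
  proof (rule borel_measurable_sum)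
    fix k assume "k \<in> {..<m}"
    then have "(\<lambda>\<zeta>. \<zeta> k) \<in> measurable (PiM {..<m} (\<lambda>_. std_gauss)) std_gauss"
      by (intro measurable_component_singleton) auto
    then have "(\<lambda>\<zeta>. \<zeta> k) \<in> borel_measurable (PiM {..<m} (\<lambda>_. std_gauss))" by simp
    then show "(\<lambda>\<zeta>. (\<zeta> k)\<^sup>2) \<in> borel_measurable (PiM {..<m} (\<lambda>_. std_gauss))" by measurable
  qed
  note this[measurable]
  show ?thesis unfolding vnorm_def[abs_def] gauss_vec_def by measurable
qed



lemma memA1[simp]: "k < n1 \<Longrightarrow> j < p \<Longrightarrow> Inl (k,j) \<in> LA n1 n2 p i"
  by (auto simp: LA_def L3_def LL_def image_iff)
lemma memA2[simp]: "k < n1 \<Longrightarrow> Inr k \<in> LA n1 n2 p i"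
  by (auto simp: LA_def L3_def LL_def image_iff)
lemma memA3[simp]: "i < p \<Longrightarrow> k < n2 \<Longrightarrow> Inl (n1+k, i) \<in> LA n1 n2 p i"
  by (auto simp: LA_def L3_def LL_def image_iff)
lemma memL3a[simp]: "k < n2 \<Longrightarrow> j < p \<Longrightarrow> j \<noteq> i \<Longrightarrow> Inl (n1+k, j) \<in> L3 n1 n2 p i"
  by (auto simp: L3_def image_iff)
lemma memL3b[simp]: "k < n2 \<Longrightarrow> Inr (n1+k) \<in> L3 n1 n2 p i"
  by (auto simp: L3_def image_iff)
lemma notLA: "l \<in> L3 n1 n2 p i \<Longrightarrow> l \<notin> LA n1 n2 p i"
  by (auto simp: LA_def)

lemma R1: "i < p \<Longrightarrow> X1 n1 p (asm (n1+n2) p (merge (LA n1 n2 p i) (L3 n1 n2 p i) (x, w)))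
   = (\<lambda>k j. if k < n1 \<and> j < p then x (Inl (k,j)) else 0)"
  by (auto simp: X1_def asm_def fun_eq_iff merge_def)

lemma R2: "i < p \<Longrightarrow> Y1 n1 p \<sigma> \<beta> (asm (n1+n2) p (merge (LA n1 n2 p i) (L3 n1 n2 p i) (x, w)))
   = (\<lambda>k. if k < n1 then (\<Sum>j<p. x (Inl (k,j)) * \<beta> j) + \<sigma> * x (Inr k) else 0)"
  by (auto simp: Y1_def Yobs_def asm_def fun_eq_iff merge_def intro!: sum.cong)

lemma R3: "i < p \<Longrightarrow> k < n2 \<Longrightarrow> j < p \<Longrightarrow> X2 n1 (asm (n1+n2) p (merge (LA n1 n2 p i) (L3 n1 n2 p i) (x, w))) k j
   = (if j = i then x (Inl (n1+k, i)) else w (Inl (n1+k, j)))"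
  by (auto simp: X2_def asm_def merge_def notLA)

lemma R4: "i < p \<Longrightarrow> k < n2 \<Longrightarrow> Y2 n1 p \<sigma> \<beta> (asm (n1+n2) p (merge (LA n1 n2 p i) (L3 n1 n2 p i) (x, w))) k
   = (\<Sum>j<p. X2 n1 (asm (n1+n2) p (merge (LA n1 n2 p i) (L3 n1 n2 p i) (x, w))) k j * \<beta> j)
     + \<sigma> * w (Inr (n1+k))"
  by (auto simp: Y2_def X2_def Yobs_def asm_def merge_def notLA)

context
  fixes n1 n2 p s :: nat and a \<sigma> \<delta> :: real
    and betahat :: "(nat \<Rightarrow> nat \<Rightarrow> real) \<Rightarrow> (nat \<Rightarrow> real) \<Rightarrow> nat \<Rightarrow> real" and \<beta> :: "nat \<Rightarrow> real"
  assumes \<sigma>pos: "0 < \<sigma>" and apos: "0 < a" and s_ge: "1 \<le> s" and s_le: "real s \<le> real p / 2"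
    and \<delta>pos: "0 < \<delta>"
    and bmeas: "\<And>i. (\<lambda>\<omega>. betahat (X1 n1 p \<omega>) (Y1 n1 p \<sigma> \<beta> \<omega>) i) \<in> borel_measurable (data_space (n1 + n2) p)"
    and \<beta>min: "\<And>j. j < p \<Longrightarrow> \<beta> j \<noteq> 0 \<Longrightarrow> a \<le> \<bar>\<beta> j\<bar>"
begin

abbreviation "sp \<equiv> \<sigma> * sqrt (1 + \<delta>\<^sup>2)"
abbreviation "DD \<equiv> data_space (n1 + n2) p"
abbreviation "BH \<omega> \<equiv> betahat (X1 n1 p \<omega>) (Y1 n1 p \<sigma> \<beta> \<omega>)"
abbreviation "bad \<omega> \<equiv> \<delta> * \<sigma> \<le> vnorm p (\<lambda>j. BH \<omega> j - \<beta> j)"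
abbreviation "err i \<omega> \<equiv> selector n2 p (thr a sp p s n2) (X2 n1 \<omega>) (Y2 n1 p \<sigma> \<beta> \<omega>) (BH \<omega>) i \<noteq> eta \<beta> i"

lemma bad_meas: "Measurable.pred DD bad"
proof -
  note bmeas[measurable]
  show ?thesis unfolding vnorm_def by measurable
qed

lemma err_meas: "Measurable.pred DD (err i)"
proof -
  note bmeas[measurable] fst_all[measurable] snd_all[measurable]
  show ?thesis unfolding selector_def vnorm_def thr_def eta_def X2_def Y2_def Yobs_def by measurable
qed

abbreviation "cc i \<zeta> \<equiv> (if \<beta> i = 0 then thr a sp p s n2 \<zeta> else max 0 (a * vnorm n2 \<zeta> - thr a sp p s n2 \<zeta>))"

lemma sp_pos: "0 < sp"
proof -
  have "0 < 1 + \<delta>\<^sup>2" by (simp add: add_pos_nonneg)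
  then show ?thesis using \<sigma>pos by simp
qed

lemma ln_nonneg: "0 \<le> ln (real p / real s - 1)"
proof -
  have "2 * real s \<le> real p" using s_le by simp
  then have "2 \<le> real p / real s" using s_ge by (simp add: field_simps)
  then show ?thesis by simp
qed

lemma thr_nonneg: "0 \<le> thr a sp p s n2 u"
  unfolding thr_def using apos ln_nonneg by (auto intro!: add_nonneg_nonneg divide_nonneg_nonneg mult_nonneg_nonneg sum_nonneg simp: vnorm_def)

lemma thr_vnorm: "vnorm n2 u = vnorm n2 u' \<Longrightarrow> thr a sp p s n2 u = thr a sp p s n2 u'"
  unfolding thr_def by simp

lemma inner_bound:
  assumes i: "i < p" and x: "x \<in> space (PiM (LA n1 n2 p i) (\<lambda>_. std_gauss))"
  shows "emeasure (PiM (L3 n1 n2 p i) (\<lambda>_. std_gauss))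
     {w \<in> space (PiM (L3 n1 n2 p i) (\<lambda>_. std_gauss)).
        \<not> bad (asm (n1+n2) p (merge (LA n1 n2 p i) (L3 n1 n2 p i) (x,w)))
        \<and> err i (asm (n1+n2) p (merge (LA n1 n2 p i) (L3 n1 n2 p i) (x,w)))}
     \<le> 2 * emeasure std_gauss {e. cc i (\<lambda>k\<in>{..<n2}. x (Inl (n1+k,i))) < sp * e}"
proof -
  let ?P = "PiM (L3 n1 n2 p i) (\<lambda>_. std_gauss)"
  let ?z = "\<lambda>w. asm (n1+n2) p (merge (LA n1 n2 p i) (L3 n1 n2 p i) (x,w))"
  let ?J = "{..<p} - {i}"
  let ?Set = "{w \<in> space ?P. \<not> bad (?z w) \<and> err i (?z w)}"
  define b where "b = betahat (\<lambda>k j. if k < n1 \<and> j < p then x (Inl (k,j)) else 0)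
      (\<lambda>k. if k < n1 then (\<Sum>j<p. x (Inl (k,j)) * \<beta> j) + \<sigma> * x (Inr k) else 0)"
  have bh: "\<And>w. BH (?z w) = b" unfolding b_def by (simp add: R1 R2 i)
  define u where "u k = x (Inl (n1+k, i))" for k
  define d where "d j = \<beta> j - b j" for j
  define N where "N = vnorm n2 u"
  define T where "T = thr a sp p s n2 u"
  define R where "R k w = (\<Sum>j\<in>?J. w (Inl (n1+k,j)) * d j) + \<sigma> * w (Inr (n1+k))" for k w
  have T0: "0 \<le> T" unfolding T_def by (rule thr_nonneg)
  have N0: "0 \<le> N" unfolding N_def vnorm_def by (auto intro!: sum_nonneg)
  have vnz: "vnorm n2 (\<lambda>k\<in>{..<n2}. x (Inl (n1+k,i))) = N"
    unfolding N_def vnorm_def u_def by (auto intro!: sum.cong)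
  have cc_eq: "cc i (\<lambda>k\<in>{..<n2}. x (Inl (n1+k,i))) = (if \<beta> i = 0 then T else max 0 (a * N - T))"
    using thr_vnorm[of "\<lambda>k\<in>{..<n2}. x (Inl (n1+k,i))" u] vnz by (simp add: T_def N_def)
  have vn2: "\<And>w. vnorm n2 (\<lambda>k. X2 n1 (?z w) k i) = N"
    unfolding N_def vnorm_def u_def by (auto simp: R3 i intro!: sum.cong)
  have thr2: "\<And>w. thr a sp p s n2 (\<lambda>k. X2 n1 (?z w) k i) = T"
    unfolding T_def by (rule thr_vnorm) (simp add: vn2 N_def)
  have ksum: "(\<Sum>k<n2. X2 n1 (?z w) k i * (Y2 n1 p \<sigma> \<beta> (?z w) k - (\<Sum>j\<in>?J. X2 n1 (?z w) k j * b j)))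
      = (\<Sum>k<n2. u k * (u k * \<beta> i + R k w))" for w
  proof (rule sum.cong)
    fix k assume k: "k \<in> {..<n2}"
    have s1: "(\<Sum>j<p. X2 n1 (?z w) k j * \<beta> j) = X2 n1 (?z w) k i * \<beta> i + (\<Sum>j\<in>?J. X2 n1 (?z w) k j * \<beta> j)"
      using i by (subst sum.remove[of "{..<p}" i]) auto
    have s2: "(\<Sum>j\<in>?J. X2 n1 (?z w) k j * \<beta> j) - (\<Sum>j\<in>?J. X2 n1 (?z w) k j * b j)
        = (\<Sum>j\<in>?J. w (Inl (n1+k,j)) * d j)"
      unfolding sum_subtractf[symmetric] d_def using k by (intro sum.cong) (auto simp: R3 i algebra_simps)
    show "X2 n1 (?z w) k i * (Y2 n1 p \<sigma> \<beta> (?z w) k - (\<Sum>j\<in>?J. X2 n1 (?z w) k j * b j)) = u k * (u k * \<beta> i + R k w)"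
      using k s1 s2 i by (simp add: R4 R3 u_def R_def algebra_simps)
  qed simp
  have sel: "selector n2 p (thr a sp p s n2) (X2 n1 (?z w)) (Y2 n1 p \<sigma> \<beta> (?z w)) (BH (?z w)) i
      \<longleftrightarrow> T < \<bar>\<Sum>k<n2. u k * (u k * \<beta> i + R k w)\<bar> / N" for w
    unfolding selector_def bh ksum vn2 thr2 by simp
  show ?thesis
  proof (cases "bad (?z undefined)")
    case True
    then have "?Set = {}" by (simp add: bh)
    then have "emeasure ?P ?Set = 0" by (simp only: emeasure_empty)
        then show ?thesis by (simp only: zero_le)
  next
    case False
    then have good: "vnorm p (\<lambda>j. b j - \<beta> j) < \<delta> * \<sigma>" by (simp add: bh)
    show ?thesis
    proof (cases "N = 0")
      case True
      show ?thesis
      proof (cases "\<beta> i = 0")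
        case True
        with \<open>N = 0\<close> T0 have "?Set = {}" by (auto simp: sel eta_def)
        then have "emeasure ?P ?Set = 0" by (simp only: emeasure_empty)
        then show ?thesis by (simp only: zero_le)
      next
        case False
        have T00: "T = 0" unfolding T_def thr_def using \<open>N = 0\<close> by (simp add: N_def)
        have "emeasure ?P ?Set \<le> 2 * emeasure std_gauss {e. max 0 (a * N - T) < sp * e}"
          by (rule half_bound) (auto simp: sp_pos \<open>N = 0\<close> T00)
        then show ?thesis unfolding cc_eq using False by simp
      qed
    next
      case False
      then have Npos: "0 < N" using N0 by simp
      define c where "c l = (case l of Inl (k',j) \<Rightarrow> u (k'-n1) * d j / N | Inr k' \<Rightarrow> u (k'-n1) * \<sigma> / N)" for l
      define v where "v = (\<Sum>j\<in>?J. (d j)\<^sup>2) + \<sigma>\<^sup>2"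
      have N2: "N\<^sup>2 = (\<Sum>k<n2. (u k)\<^sup>2)" unfolding N_def vnorm_def by (simp add: sum_nonneg)
      have Sw: "(\<Sum>l\<in>L3 n1 n2 p i. c l * w l) = (\<Sum>k<n2. u k * R k w) / N" for w
        unfolding sum_L3 c_def R_def
        by (simp add: sum_divide_distrib sum_distrib_left sum.distrib add_divide_distrib algebra_simps)
      have stat: "(\<Sum>k<n2. u k * (u k * \<beta> i + R k w)) / N = N * \<beta> i + (\<Sum>l\<in>L3 n1 n2 p i. c l * w l)" for w
      proof -
        have "(\<Sum>k<n2. u k * (u k * \<beta> i + R k w)) = N\<^sup>2 * \<beta> i + (\<Sum>k<n2. u k * R k w)"
          unfolding N2 by (simp add: distrib_left sum.distrib sum_distrib_left power2_eq_square algebra_simps)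
        then show ?thesis using Npos by (simp add: Sw add_divide_distrib power2_eq_square)
      qed
      have statabs: "\<bar>\<Sum>k<n2. u k * (u k * \<beta> i + R k w)\<bar> / N = \<bar>N * \<beta> i + (\<Sum>l\<in>L3 n1 n2 p i. c l * w l)\<bar>" for w
      proof -
        have "\<bar>\<Sum>k<n2. u k * (u k * \<beta> i + R k w)\<bar> / N = \<bar>(\<Sum>k<n2. u k * (u k * \<beta> i + R k w)) / N\<bar>"
          using Npos by (simp add: abs_divide)
        then show ?thesis by (simp only: stat)
      qed
      have csq: "(\<Sum>l\<in>L3 n1 n2 p i. (c l)\<^sup>2) = v"
      proof -
        have "(\<Sum>l\<in>L3 n1 n2 p i. (c l)\<^sup>2) = (\<Sum>k<n2. (u k)\<^sup>2 * v / N\<^sup>2)"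
          unfolding sum_L3 c_def v_def
          by (intro sum.cong refl) (simp add: power_divide power_mult_distrib sum_divide_distrib[symmetric] sum_distrib_left add_divide_distrib algebra_simps)
        also have "\<dots> = (\<Sum>k<n2. (u k)\<^sup>2) * v / N\<^sup>2"
          by (simp add: sum_divide_distrib[symmetric] sum_distrib_right[symmetric])
        also have "\<dots> = v" using Npos by (simp add: N2[symmetric])
        finally show ?thesis .
      qed
      have vpos: "0 < v" unfolding v_def using \<sigma>pos by (auto intro!: add_nonneg_pos sum_nonneg)
      have vlt: "sqrt v < sp"
      proof -
        have "(\<Sum>j\<in>?J. (d j)\<^sup>2) \<le> (\<Sum>j<p. (d j)\<^sup>2)" by (rule sum_mono2) auto
        also have "\<dots> = (vnorm p (\<lambda>j. b j - \<beta> j))\<^sup>2"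
          unfolding vnorm_def d_def by (simp add: sum_nonneg power2_commute)
        also have "\<dots> < (\<delta> * \<sigma>)\<^sup>2"
          using good by (intro power_strict_mono) (auto simp: vnorm_def intro!: sum_nonneg)
        finally have "v < \<sigma>\<^sup>2 * (1 + \<delta>\<^sup>2)" unfolding v_def by (simp add: algebra_simps power_mult_distrib)
        also have "\<dots> = sp\<^sup>2" by (simp add: power_mult_distrib)
        finally have "v < sp\<^sup>2" .
        then have "sqrt v < sqrt (sp\<^sup>2)" by (rule real_sqrt_less_mono)
        then show ?thesis using sp_pos by simp
      qed
      show ?thesis
      proof (cases "\<beta> i = 0")
        case True
        have "emeasure ?P ?Set \<le> emeasure ?P {w \<in> space ?P. T < \<bar>\<Sum>l\<in>L3 n1 n2 p i. c l * w l\<bar>}"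
        proof (rule emeasure_mono)
          show "?Set \<subseteq> {w \<in> space ?P. T < \<bar>\<Sum>l\<in>L3 n1 n2 p i. c l * w l\<bar>}"
          proof -
            have st0: "\<bar>\<Sum>k<n2. u k * R k w\<bar> / N = \<bar>\<Sum>l\<in>L3 n1 n2 p i. c l * w l\<bar>" for w
              using statabs[of w] True by simp
            show ?thesis using True by (auto simp: sel eta_def st0)
          qed
          show "{w \<in> space ?P. T < \<bar>\<Sum>l\<in>L3 n1 n2 p i. c l * w l\<bar>} \<in> sets ?P" (is "?thesis")
          proof -
            note S_meas[OF finite_L3 csq vpos vlt, measurable]
            show ?thesis by measurable
          qed
        qed
        also have "\<dots> \<le> 2 * emeasure std_gauss {e. T < sp * e}"
          by (rule core_null[OF finite_L3 csq vpos vlt T0])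
        finally show ?thesis unfolding cc_eq using True by simp
      next
        case False
        have mm: "T + (a * N - T) \<le> \<bar>N * \<beta> i\<bar>"
          using \<beta>min[OF i False] N0 by (simp add: abs_mult mult_left_mono mult.commute)
        have "emeasure ?P ?Set \<le> emeasure ?P {w \<in> space ?P. \<not> (T < \<bar>N * \<beta> i + (\<Sum>l\<in>L3 n1 n2 p i. c l * w l)\<bar>)}"
        proof (rule emeasure_mono)
          show "?Set \<subseteq> {w \<in> space ?P. \<not> (T < \<bar>N * \<beta> i + (\<Sum>l\<in>L3 n1 n2 p i. c l * w l)\<bar>)}"
            using False by (auto simp: sel eta_def statabs)
          show "{w \<in> space ?P. \<not> (T < \<bar>N * \<beta> i + (\<Sum>l\<in>L3 n1 n2 p i. c l * w l)\<bar>)} \<in> sets ?P" (is "?thesis")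
          proof -
            note S_meas[OF finite_L3 csq vpos vlt, measurable]
            show ?thesis by measurable
          qed
        qed
        also have "\<dots> \<le> 2 * emeasure std_gauss {e. max 0 (a * N - T) < sp * e}"
          by (rule core_nonnull[OF finite_L3 csq vpos vlt mm])
        finally show ?thesis unfolding cc_eq using False by simp
      qed
    qed
  qed
qed

abbreviation "NN \<equiv> std_gauss \<Otimes>\<^sub>M gauss_vec n2"

lemma cc_meas: "Measurable.pred (gauss_vec n2 \<Otimes>\<^sub>M std_gauss) (\<lambda>x. cc i (fst x) < sp * snd x)"
  unfolding thr_def by measurable

lemma cc_meas2: "Measurable.pred NN (\<lambda>x. cc i (snd x) < sp * fst x)"
  unfolding thr_def by measurable

lemma g_meas: "(\<lambda>\<zeta>. emeasure std_gauss {e. cc i \<zeta> < sp * e}) \<in> borel_measurable (gauss_vec n2)"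
proof (rule sigma_finite_measure.measurable_emeasure)
  show "sigma_finite_measure std_gauss" by (simp add: prob_space_imp_sigma_finite)
  show "{x \<in> space (gauss_vec n2 \<Otimes>\<^sub>M std_gauss). snd x \<in> {e. cc i (fst x) < sp * e}} \<in> sets (gauss_vec n2 \<Otimes>\<^sub>M std_gauss)"
    using cc_meas[of i] by measurable
qed simp

lemma key:
  assumes i: "i < p"
  shows "emeasure DD {\<omega> \<in> space DD. \<not> bad \<omega> \<and> err i \<omega>}
      \<le> 2 * emeasure NN {x \<in> space NN. cc i (snd x) < sp * fst x}"
proof -
  let ?n = "n1 + n2"
  let ?A = "LA n1 n2 p i"
  let ?B = "L3 n1 n2 p i"
  let ?G = "\<lambda>\<omega>. \<not> bad \<omega> \<and> err i \<omega>"
  let ?Q = "QQ ?n p"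
  let ?S = "{z \<in> space ?Q. ?G (asm ?n p z)}"
  let ?g = "\<lambda>\<zeta>. emeasure std_gauss {e. cc i \<zeta> < sp * e}"
  interpret P: product_prob_space "\<lambda>_::(nat\<times>nat)+nat. std_gauss" "LL ?n p" by (rule psp_std)
  have Gm: "Measurable.pred DD ?G"
    by (intro pred_intros_logic bad_meas err_meas)
  have QG: "Measurable.pred ?Q (\<lambda>z. ?G (asm ?n p z))"
    by (rule measurable_compose[OF asm_meas Gm])
  have Sm: "?S \<in> sets ?Q" by (rule predE[OF QG])
  have "emeasure DD {\<omega> \<in> space DD. ?G \<omega>} = emeasure (distr ?Q DD (asm ?n p)) {\<omega> \<in> space DD. ?G \<omega>}"
    by (simp add: D_eq)
  also have "\<dots> = emeasure ?Q (asm ?n p -` {\<omega> \<in> space DD. ?G \<omega>} \<inter> space ?Q)"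
    by (rule emeasure_distr[OF asm_meas predE[OF Gm]])
  also have "asm ?n p -` {\<omega> \<in> space DD. ?G \<omega>} \<inter> space ?Q = ?S"
    using measurable_space[OF asm_meas] by blast
  also have "emeasure ?Q ?S = (\<integral>\<^sup>+z. indicator ?S z \<partial>?Q)"
    using Sm by simp
  also have "\<dots> = (\<integral>\<^sup>+x. (\<integral>\<^sup>+w. indicator ?S (merge ?A ?B (x, w)) \<partial>PiM ?B (\<lambda>_. std_gauss)) \<partial>PiM ?A (\<lambda>_. std_gauss))"
    unfolding QQ_def LL_split(1)[of n1 n2 p i]
    by (rule P.product_nn_integral_fold) (use LL_split(2)[of n1 n2 p i] Sm in \<open>auto simp: QQ_def LL_split(1)[of n1 n2 p i]\<close>)
  also have "\<dots> \<le> (\<integral>\<^sup>+x. 2 * ?g (\<lambda>k\<in>{..<n2}. x (Inl (n1+k,i))) \<partial>PiM ?A (\<lambda>_. std_gauss))"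
  proof (rule nn_integral_mono)
    fix x assume x: "x \<in> space (PiM ?A (\<lambda>_. std_gauss))"
    have mm: "(\<lambda>w. merge ?A ?B (x, w)) \<in> measurable (PiM ?B (\<lambda>_. std_gauss)) ?Q"
      unfolding QQ_def LL_split(1)[of n1 n2 p i]
      by (rule measurable_compose[OF measurable_Pair1'[OF x] measurable_merge])
    let ?W = "{w \<in> space (PiM ?B (\<lambda>_. std_gauss)). ?G (asm ?n p (merge ?A ?B (x, w)))}"
    have Wm: "?W \<in> sets (PiM ?B (\<lambda>_. std_gauss))"
      by (rule predE[OF measurable_compose[OF mm QG]])
    have "(\<integral>\<^sup>+w. indicator ?S (merge ?A ?B (x, w)) \<partial>PiM ?B (\<lambda>_. std_gauss))
        = (\<integral>\<^sup>+w. indicator ?W w \<partial>PiM ?B (\<lambda>_. std_gauss))"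
      using measurable_space[OF mm] by (intro nn_integral_cong) (auto simp: indicator_def)
    also have "\<dots> = emeasure (PiM ?B (\<lambda>_. std_gauss)) ?W" using Wm by simp
    also have "\<dots> \<le> 2 * ?g (\<lambda>k\<in>{..<n2}. x (Inl (n1+k,i)))"
      by (rule inner_bound[OF i x])
    finally show "(\<integral>\<^sup>+w. indicator ?S (merge ?A ?B (x, w)) \<partial>PiM ?B (\<lambda>_. std_gauss))
        \<le> 2 * ?g (\<lambda>k\<in>{..<n2}. x (Inl (n1+k,i)))" .
  qed
  also have "\<dots> = (\<integral>\<^sup>+\<zeta>. 2 * ?g \<zeta> \<partial>gauss_vec n2)"
  proof -
    have dr: "distr (PiM ?A (\<lambda>_. std_gauss)) (PiM {..<n2} (\<lambda>_. std_gauss)) (\<lambda>\<omega>. \<lambda>k\<in>{..<n2}. \<omega> (Inl (n1+k,i)))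
        = PiM {..<n2} (\<lambda>_. std_gauss)"
      using distr_PiM_reindex[of ?A "\<lambda>_. std_gauss" "\<lambda>k. Inl (n1+k,i)" "{..<n2}"] i
      by (auto simp: inj_on_def)
    have rm: "(\<lambda>\<omega>. \<lambda>k\<in>{..<n2}. \<omega> (Inl (n1+k,i))) \<in> measurable (PiM ?A (\<lambda>_. std_gauss)) (PiM {..<n2} (\<lambda>_. std_gauss))"
      using i by (intro measurable_restrict measurable_component_singleton) auto
    have gm: "(\<lambda>\<zeta>. 2 * ?g \<zeta>) \<in> borel_measurable (gauss_vec n2)"
    proof -
      show ?thesis by (rule borel_measurable_times_ennreal[OF borel_measurable_const g_meas])
    qed
    have gm': "(\<lambda>\<zeta>. 2 * ?g \<zeta>) \<in> borel_measurable (distr (PiM ?A (\<lambda>_. std_gauss)) (PiM {..<n2} (\<lambda>_. std_gauss)) (\<lambda>\<omega>. \<lambda>k\<in>{..<n2}. \<omega> (Inl (n1+k,i))))"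
      using gm by (simp only: dr gauss_vec_def)
    have "(\<integral>\<^sup>+x. 2 * ?g (\<lambda>k\<in>{..<n2}. x (Inl (n1+k,i))) \<partial>PiM ?A (\<lambda>_. std_gauss))
        = (\<integral>\<^sup>+\<zeta>. 2 * ?g \<zeta> \<partial>distr (PiM ?A (\<lambda>_. std_gauss)) (PiM {..<n2} (\<lambda>_. std_gauss)) (\<lambda>\<omega>. \<lambda>k\<in>{..<n2}. \<omega> (Inl (n1+k,i))))"
      by (rule nn_integral_distr[OF rm gm', symmetric])
    also have "\<dots> = (\<integral>\<^sup>+\<zeta>. 2 * ?g \<zeta> \<partial>gauss_vec n2)"
      by (simp only: dr gauss_vec_def)
    finally show ?thesis .
  qed
  also have "\<dots> = 2 * (\<integral>\<^sup>+\<zeta>. ?g \<zeta> \<partial>gauss_vec n2)"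
    by (rule nn_integral_cmult[OF g_meas])
  also have "(\<integral>\<^sup>+\<zeta>. ?g \<zeta> \<partial>gauss_vec n2) = emeasure NN {x \<in> space NN. cc i (snd x) < sp * fst x}"
  proof -
    interpret PS: pair_sigma_finite std_gauss "gauss_vec n2"
      by (intro pair_sigma_finite.intro prob_space_imp_sigma_finite) simp_all
    have "emeasure NN {x \<in> space NN. cc i (snd x) < sp * fst x}
        = (\<integral>\<^sup>+\<zeta>. emeasure std_gauss ((\<lambda>e. (e, \<zeta>)) -` {x \<in> space NN. cc i (snd x) < sp * fst x}) \<partial>gauss_vec n2)"
      by (rule PS.emeasure_pair_measure_alt2[OF predE[OF cc_meas2]])
    also have "\<dots> = (\<integral>\<^sup>+\<zeta>. ?g \<zeta> \<partial>gauss_vec n2)"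
      by (intro nn_integral_cong arg_cong2[where f=emeasure]) (auto simp: space_pair_measure)
    finally show ?thesis by simp
  qed
  finally show ?thesis .
qed

end


theorem theorem2:
  fixes n1 n2 p s :: nat
    and a \<sigma> A \<delta> C0 C1 C2 :: real
    and betahat :: "(nat \<Rightarrow> nat \<Rightarrow> real) \<Rightarrow> (nat \<Rightarrow> real) \<Rightarrow> nat \<Rightarrow> real"
  assumes sigma_pos: "0 < \<sigma>"
    and a_pos: "0 < a"
    and A_ge: "A \<ge> 16 + 4 * sqrt 2"
    and s_ge: "1 \<le> s"
    and s_le: "real s \<le> real p / 2"
    and n2_pos: "0 < n2"
    and delta: "0 < \<delta>" "\<delta> \<le> 1"
    and sqrt_slope_min:
      "\<And>X Y b. sqrt_slope_obj A (n1 + n2) n1 p X Y (betahat X Y)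
                 \<le> sqrt_slope_obj A (n1 + n2) n1 p X Y b"
    and betahat_meas:
      "\<And>\<beta> i. (\<lambda>\<omega>. betahat (X1 n1 p \<omega>) (Y1 n1 p \<sigma> \<beta> \<omega>) i)
                \<in> borel_measurable (data_space (n1 + n2) p)"
    and slope_fact:
      "\<And>\<delta>' \<beta>. 0 < \<delta>' \<Longrightarrow> \<delta>' \<le> 1 \<Longrightarrow>
          real n1 > C0 / \<delta>'\<^sup>2 * real s * ln (exp 1 * real p / real s) \<Longrightarrow>
          (\<forall>i\<ge>p. \<beta> i = 0) \<Longrightarrow> card {i. i < p \<and> \<beta> i \<noteq> 0} \<le> s \<Longrightarrow>
          measure (data_space (n1 + n2) p)
            {\<omega> \<in> space (data_space (n1 + n2) p).
               vnorm p (\<lambda>i. betahat (X1 n1 p \<omega>) (Y1 n1 p \<sigma> \<beta> \<omega>) i - \<beta> i) \<ge> \<delta>' * \<sigma>}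
          \<le> C1 * (real s / (2 * real p)) powr (C2 * real s)"
    and n1_large: "real n1 > C0 / \<delta>\<^sup>2 * real s * ln (exp 1 * real p / real s)"
  shows "\<forall>\<beta> \<in> Omega p s a.
     (integral\<^sup>L (data_space (n1 + n2) p)
        (\<lambda>\<omega>. real (card {i. i < p \<and>
            selector n2 p (thr a (\<sigma> * sqrt (1 + \<delta>\<^sup>2)) p s n2) (X2 n1 \<omega>) (Y2 n1 p \<sigma> \<beta> \<omega>)
              (betahat (X1 n1 p \<omega>) (Y1 n1 p \<sigma> \<beta> \<omega>)) i \<noteq> eta \<beta> i}))
      \<le> 2 * psi n2 p s a (\<sigma> * sqrt (1 + \<delta>\<^sup>2))
        + C1 * (real s / 2) powr (C2 * real s) * real p powr (1 - C2 * real s))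
   \<and> (measure (data_space (n1 + n2) p)
        {\<omega> \<in> space (data_space (n1 + n2) p). \<exists>i<p.
            selector n2 p (thr a (\<sigma> * sqrt (1 + \<delta>\<^sup>2)) p s n2) (X2 n1 \<omega>) (Y2 n1 p \<sigma> \<beta> \<omega>)
              (betahat (X1 n1 p \<omega>) (Y1 n1 p \<sigma> \<beta> \<omega>)) i \<noteq> eta \<beta> i}
      \<le> 2 * psi n2 p s a (\<sigma> * sqrt (1 + \<delta>\<^sup>2))
        + C1 * (real s / 2) powr (C2 * real s) * real p powr (- C2 * real s))"
proof (intro ballI conjI)
  fix \<beta> assume \<beta>O: "\<beta> \<in> Omega p s a"
  have \<beta>_out: "\<forall>i\<ge>p. \<beta> i = 0" and \<beta>_card: "card {i. i < p \<and> \<beta> i \<noteq> 0} \<le> s"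
    and \<beta>min: "\<And>j. j < p \<Longrightarrow> \<beta> j \<noteq> 0 \<Longrightarrow> a \<le> \<bar>\<beta> j\<bar>"
    using \<beta>O by (auto simp: Omega_def)
  let ?D = "data_space (n1 + n2) p"
  let ?sp = "\<sigma> * sqrt (1 + \<delta>\<^sup>2)"
  let ?NN = "std_gauss \<Otimes>\<^sub>M gauss_vec n2"
  let ?BH = "\<lambda>\<omega>. betahat (X1 n1 p \<omega>) (Y1 n1 p \<sigma> \<beta> \<omega>)"
  let ?sel = "\<lambda>i \<omega>. selector n2 p (thr a ?sp p s n2) (X2 n1 \<omega>) (Y2 n1 p \<sigma> \<beta> \<omega>) (?BH \<omega>) i"
  interpret D: prob_space ?D by simp
  interpret N: prob_space ?NN by (intro prob_space_pair) simp_all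
  have bm: "\<And>i. (\<lambda>\<omega>. betahat (X1 n1 p \<omega>) (Y1 n1 p \<sigma> \<beta> \<omega>) i) \<in> borel_measurable ?D"
    by (rule betahat_meas)
  note ctx = sigma_pos a_pos s_ge s_le delta(1) bm \<beta>min
  define Err where "Err i = {\<omega> \<in> space ?D. ?sel i \<omega> \<noteq> eta \<beta> i}" for i
  define Bad where "Bad = {\<omega> \<in> space ?D. \<delta> * \<sigma> \<le> vnorm p (\<lambda>j. ?BH \<omega> j - \<beta> j)}"
  define GE where "GE i = {\<omega> \<in> space ?D. \<not> \<delta> * \<sigma> \<le> vnorm p (\<lambda>j. ?BH \<omega> j - \<beta> j) \<and> ?sel i \<omega> \<noteq> eta \<beta> i}" for i
  define S0 where "S0 = {x \<in> space ?NN. ?sp * fst x > thr a ?sp p s n2 (snd x)}"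
  define S1 where "S1 = {x \<in> space ?NN. ?sp * fst x > max 0 (a * vnorm n2 (snd x) - thr a ?sp p s n2 (snd x))}"
  define m0 where "m0 = measure ?NN S0"
  define m1 where "m1 = measure ?NN S1"
  define Cb where "Cb = C1 * (real s / (2 * real p)) powr (C2 * real s)"
  have ErrS: "Err i \<in> sets ?D" for i
    unfolding Err_def by (rule predE[OF err_meas[OF ctx]])
  have BadS: "Bad \<in> sets ?D"
    unfolding Bad_def by (rule predE[OF bad_meas[OF ctx]])
  have GES: "GE i \<in> sets ?D" for i
    unfolding GE_def by (rule predE) (intro pred_intros_logic bad_meas[OF ctx] err_meas[OF ctx])
  have PBad: "D.prob Bad \<le> Cb"
    using slope_fact[OF delta n1_large \<beta>_out \<beta>_card] by (simp add: Bad_def Cb_def)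
  have PGE: "D.prob (GE i) \<le> 2 * (if \<beta> i = 0 then m0 else m1)" if i: "i < p" for i
  proof -
    have "{x \<in> space ?NN. (if \<beta> i = 0 then thr a ?sp p s n2 (snd x) else max 0 (a * vnorm n2 (snd x) - thr a ?sp p s n2 (snd x))) < ?sp * fst x}
        = (if \<beta> i = 0 then S0 else S1)"
      unfolding S0_def S1_def by auto
    then have "emeasure ?D (GE i) \<le> 2 * emeasure ?NN (if \<beta> i = 0 then S0 else S1)"
      using key[OF ctx i] unfolding GE_def by simp
    also have "\<dots> = ennreal (2 * (if \<beta> i = 0 then m0 else m1))"
      unfolding m0_def m1_def by (simp add: N.emeasure_eq_measure ennreal_mult)
    finally have "ennreal (D.prob (GE i)) \<le> ennreal (2 * (if \<beta> i = 0 then m0 else m1))"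
      by (simp add: D.emeasure_eq_measure)
    moreover have "0 \<le> 2 * (if \<beta> i = 0 then m0 else m1)" by (simp add: m0_def m1_def)
    ultimately show ?thesis by (simp only: ennreal_le_iff)
  qed
  have Err_le: "D.prob (Err i) \<le> D.prob Bad + D.prob (GE i)" for i
  proof -
    have "Err i \<subseteq> Bad \<union> GE i" by (auto simp: Err_def Bad_def GE_def)
    then have "D.prob (Err i) \<le> D.prob (Bad \<union> GE i)"
      by (rule D.finite_measure_mono) (rule sets.Un[OF BadS GES])
    also have "\<dots> \<le> D.prob Bad + D.prob (GE i)"
      by (rule measure_Un_le[OF BadS GES])
    finally show ?thesis .
  qed
  have thr0: "\<And>u. 0 \<le> thr a ?sp p s n2 u" by (rule thr_nonneg[OF ctx])
  have S01: "S0 \<subseteq> S1"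
  proof
    fix x assume "x \<in> S0"
    then have x: "x \<in> space ?NN" "thr a ?sp p s n2 (snd x) < ?sp * fst x" by (auto simp: S0_def)
    have "a * vnorm n2 (snd x) - thr a ?sp p s n2 (snd x) \<le> thr a ?sp p s n2 (snd x)"
    proof -
      have "0 \<le> ?sp\<^sup>2 * ln (real p / real s - 1) / (a * vnorm n2 (snd x))"
        using ln_nonneg[OF ctx] a_pos by (auto intro!: divide_nonneg_nonneg mult_nonneg_nonneg sum_nonneg simp: vnorm_def)
      then show ?thesis unfolding thr_def by simp
    qed
    then show "x \<in> S1" using x thr0[of "snd x"] by (auto simp: S1_def)
  qed
  have S1S: "S1 \<in> sets ?NN"
  proof -
    have "S1 = {x \<in> space ?NN. (\<lambda>x. (if \<beta> 0 = 0 \<and> False then 0 else max 0 (a * vnorm n2 (snd x) - thr a ?sp p s n2 (snd x))) < ?sp * fst x) x}"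
      unfolding S1_def by simp
    show ?thesis unfolding S1_def thr_def by measurable
  qed
  have m01: "m0 \<le> m1" unfolding m0_def m1_def by (rule N.finite_measure_mono[OF S01 S1S])
  have m00: "0 \<le> m0" unfolding m0_def by simp
  have p2: "2 \<le> real p" using s_ge s_le by simp
  have ppos: "0 < real p" using p2 by simp
  have sumM: "(\<Sum>i<p. (if \<beta> i = 0 then m0 else m1)) \<le> (real p - real s) * m0 + real s * m1"
  proof -
    let ?Z = "{i \<in> {..<p}. \<beta> i = 0}" and ?NZ = "{i \<in> {..<p}. \<beta> i \<noteq> 0}"
    have c: "card ?Z + card ?NZ = p"
    proof -
      have "card (?Z \<union> ?NZ) = card ?Z + card ?NZ" by (rule card_Un_disjoint) auto
      moreover have "?Z \<union> ?NZ = {..<p}" by auto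
      ultimately show ?thesis by simp
    qed
    have "(\<Sum>i<p. (if \<beta> i = 0 then m0 else m1)) = (\<Sum>i\<in>?Z. m0) + (\<Sum>i\<in>?NZ. m1)"
      by (simp add: sum.If_cases Int_def)
    also have "\<dots> = real (card ?Z) * m0 + real (card ?NZ) * m1" by simp
    also have "\<dots> = (real p - real (card ?NZ)) * m0 + real (card ?NZ) * m1"
    proof -
      have "real (card ?Z) + real (card ?NZ) = real p" using c by (metis of_nat_add)
      then have "real (card ?Z) = real p - real (card ?NZ)" by linarith
      then show ?thesis by simp
    qed
    also have "\<dots> \<le> (real p - real s) * m0 + real s * m1"
    proof -
      have "card ?NZ \<le> s" using \<beta>_card by (simp add: conj_commute)
      then have "0 \<le> (real s - real (card ?NZ)) * (m1 - m0)" using m01 by simp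
      then show ?thesis by (simp add: algebra_simps)
    qed
    finally show ?thesis .
  qed
  have psi_eq: "psi n2 p s a ?sp = (real p - real s) * m0 + real s * m1"
    by (simp add: psi_def m0_def m1_def S0_def S1_def Let_def)
  have pw: "(real s / (2 * real p)) powr (C2 * real s) = (real s / 2) powr (C2 * real s) * real p powr (- C2 * real s)"
    using ppos by (simp add: powr_divide powr_minus_divide divide_inverse[symmetric] mult.commute[of 2] flip: divide_divide_eq_left)
       (simp add: divide_divide_eq_left ac_simps)
  have pw1: "real p * real p powr (- C2 * real s) = real p powr (1 - C2 * real s)"
  proof -
    have "real p powr (1 - C2 * real s) = real p powr 1 * real p powr (- C2 * real s)"
      unfolding powr_add[symmetric] by simp
    then show ?thesis using ppos by simp
  qed
  have sumGE: "(\<Sum>i<p. D.prob (GE i)) \<le> 2 * psi n2 p s a ?sp"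
  proof -
    have "(\<Sum>i<p. D.prob (GE i)) \<le> (\<Sum>i<p. 2 * (if \<beta> i = 0 then m0 else m1))"
      by (rule sum_mono) (use PGE in auto)
    also have "\<dots> \<le> 2 * psi n2 p s a ?sp"
      using sumM unfolding psi_eq by (simp add: sum_distrib_left[symmetric])
    finally show ?thesis .
  qed
  have card_eq: "real (card {i. i < p \<and> ?sel i \<omega> \<noteq> eta \<beta> i}) = (\<Sum>i<p. indicator (Err i) \<omega>)"
    if w: "\<omega> \<in> space ?D" for \<omega>
  proof -
    have "{i. i < p \<and> ?sel i \<omega> \<noteq> eta \<beta> i} = {i \<in> {..<p}. ?sel i \<omega> \<noteq> eta \<beta> i}" by auto
    then have "real (card {i. i < p \<and> ?sel i \<omega> \<noteq> eta \<beta> i}) = (\<Sum>i\<in>{i \<in> {..<p}. ?sel i \<omega> \<noteq> eta \<beta> i}. 1)"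
      by simp
    also have "\<dots> = (\<Sum>i<p. if ?sel i \<omega> \<noteq> eta \<beta> i then 1 else 0)"
      by (rule sum.inter_filter) simp
    also have "\<dots> = (\<Sum>i<p. indicator (Err i) \<omega>)"
      using w by (intro sum.cong) (auto simp: Err_def indicator_def)
    finally show ?thesis .
  qed
  have "integral\<^sup>L ?D (\<lambda>\<omega>. real (card {i. i < p \<and> ?sel i \<omega> \<noteq> eta \<beta> i}))
      = integral\<^sup>L ?D (\<lambda>\<omega>. \<Sum>i<p. indicator (Err i) \<omega>)"
    by (rule Bochner_Integration.integral_cong[OF refl card_eq])
  also have "\<dots> = (\<Sum>i<p. integral\<^sup>L ?D (indicator (Err i)))"
    by (rule Bochner_Integration.integral_sum) (auto intro!: integrable_real_indicator ErrS simp: D.emeasure_eq_measure)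
  also have "\<dots> = (\<Sum>i<p. D.prob (Err i))"
    using ErrS by (simp add: Int_absorb2 sets.sets_into_space)
  also have "\<dots> \<le> (\<Sum>i<p. D.prob Bad + D.prob (GE i))"
    by (rule sum_mono) (rule Err_le)
  also have "\<dots> = real p * D.prob Bad + (\<Sum>i<p. D.prob (GE i))"
    by (simp add: sum.distrib)
  also have "\<dots> \<le> real p * Cb + 2 * psi n2 p s a ?sp"
    using PBad sumGE by (intro add_mono mult_left_mono) auto
  also have "real p * Cb = C1 * (real s / 2) powr (C2 * real s) * real p powr (1 - C2 * real s)"
    unfolding Cb_def pw pw1[symmetric] by (simp add: algebra_simps)
  finally show "integral\<^sup>L ?D (\<lambda>\<omega>. real (card {i. i < p \<and> ?sel i \<omega> \<noteq> eta \<beta> i}))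
      \<le> 2 * psi n2 p s a ?sp + C1 * (real s / 2) powr (C2 * real s) * real p powr (1 - C2 * real s)"
    by simp
  have UGE: "(\<Union>i\<in>{..<p}. GE i) \<in> sets ?D" by (intro sets.finite_UN GES) auto
  have "{\<omega> \<in> space ?D. \<exists>i<p. ?sel i \<omega> \<noteq> eta \<beta> i} \<subseteq> Bad \<union> (\<Union>i\<in>{..<p}. GE i)"
    by (auto simp: Bad_def GE_def)
  then have "D.prob {\<omega> \<in> space ?D. \<exists>i<p. ?sel i \<omega> \<noteq> eta \<beta> i} \<le> D.prob (Bad \<union> (\<Union>i\<in>{..<p}. GE i))"
    by (rule D.finite_measure_mono) (rule sets.Un[OF BadS UGE])
  also have "\<dots> \<le> D.prob Bad + D.prob (\<Union>i\<in>{..<p}. GE i)"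
    by (rule measure_Un_le[OF BadS UGE])
  also have "D.prob (\<Union>i\<in>{..<p}. GE i) \<le> (\<Sum>i<p. D.prob (GE i))"
    by (rule D.finite_measure_subadditive_finite) (auto intro: GES)
  also have "D.prob Bad + (\<Sum>i<p. D.prob (GE i)) \<le> Cb + 2 * psi n2 p s a ?sp"
    using PBad sumGE by simp
  also have "Cb = C1 * (real s / 2) powr (C2 * real s) * real p powr (- C2 * real s)"
    unfolding Cb_def pw by simp
  finally show "D.prob {\<omega> \<in> space ?D. \<exists>i<p. ?sel i \<omega> \<noteq> eta \<beta> i}
      \<le> 2 * psi n2 p s a ?sp + C1 * (real s / 2) powr (C2 * real s) * real p powr (- C2 * real s)"
    by simp
qed


end
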